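(* A topological space $X$ is set strongly star Menger if and only if every closed subspace of $X$ is strongly star Menger.
   Context: For a family $\mathcal U$ of subsets of $X$ and $A\subseteq X$, $st(A,\mathcal U)=\bigcup\{U\in\mathcal U: U\cap A\neq\emptyset\}$. A space $Y$ is strongly star Menger if for every sequence $(\mathcal U_n:n\in\omega)$ of open covers of $Y$ there are finite sets $F_n\subseteq Y$ with $Y=\bigcup_{n}st(F_n,\mathcal U_n)$. A space $X$ is set strongly star Menger if for every nonempty $A\subseteq X$ and every sequence $(\mathcal U_n:n\in\omega)$ of families of open subsets of $X$ with $\overline A\subseteq\bigcup\mathcal U_n$ for all $n$, there are finite sets $F_n\subseteq\overline A$ ($n\in\omega$) with $A\subseteq\bigcup_{n}st(F_n,\mathcal U_n)$. *)

theory Defs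
  imports "HOL-Analysis.Analysis"
begin

definition st :: "'a set \<Rightarrow> 'a set set \<Rightarrow> 'a set" where
  "st A \<U> = \<Union>{U \<in> \<U>. U \<inter> A \<noteq> {}}"

definition strongly_star_Menger :: "'a topology \<Rightarrow> bool" where
  "strongly_star_Menger Y \<longleftrightarrow>
     (\<forall>\<U> :: nat \<Rightarrow> 'a set set.
        (\<forall>n. (\<forall>U\<in>\<U> n. openin Y U) \<and> \<Union>(\<U> n) = topspace Y) \<longrightarrow>
        (\<exists>F :: nat \<Rightarrow> 'a set. (\<forall>n. finite (F n) \<and> F n \<subseteq> topspace Y) \<and>
           topspace Y = (\<Union>n. st (F n) (\<U> n))))"

definition set_strongly_star_Menger :: "'a topology \<Rightarrow> bool" where
  "set_strongly_star_Menger X \<longleftrightarrow>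
     (\<forall>A. A \<noteq> {} \<and> A \<subseteq> topspace X \<longrightarrow>
       (\<forall>\<U> :: nat \<Rightarrow> 'a set set.
          (\<forall>n. (\<forall>U\<in>\<U> n. openin X U) \<and> X closure_of A \<subseteq> \<Union>(\<U> n)) \<longrightarrow>
          (\<exists>F :: nat \<Rightarrow> 'a set. (\<forall>n. finite (F n) \<and> F n \<subseteq> X closure_of A) \<and>
             A \<subseteq> (\<Union>n. st (F n) (\<U> n)))))"

end

theory Submission
  imports Defs
begin

lemma fwd:
  assumes S: "set_strongly_star_Menger X" and C: "closedin X C"
  shows "strongly_star_Menger (subtopology X C)"
  unfolding strongly_star_Menger_def
proof (intro allI impI)
  fix \<U> :: "nat \<Rightarrow> 'a set set"
  assume H: "\<forall>n. (\<forall>U\<in>\<U> n. openin (subtopology X C) U) \<and> \<Union>(\<U> n) = topspace (subtopology X C)"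
  have CT: "C \<subseteq> topspace X" using C closedin_subset by blast
  have top: "topspace (subtopology X C) = C" using CT by auto
  show "\<exists>F. (\<forall>n. finite (F n) \<and> F n \<subseteq> topspace (subtopology X C)) \<and>
           topspace (subtopology X C) = (\<Union>n. st (F n) (\<U> n))"
  proof (cases "C = {}")
    case True
    have "st {} (\<U> n) = {}" for n by (simp add: st_def)
    then show ?thesis using top True by (intro exI[of _ "\<lambda>n. {}"]) simp
  next
    case False
    define W where "W n = {V. openin X V \<and> V \<inter> C \<in> \<U> n}" for n
    have cl: "X closure_of C = C" using C by (simp add: closure_of_eq)
    have cov: "X closure_of C \<subseteq> \<Union>(W n)" for n
    proof
      fix x assume "x \<in> X closure_of C"
      hence x: "x \<in> C" using cl by simp
      have "\<Union>(\<U> n) = C" using H top by simp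
      then obtain U where U: "U \<in> \<U> n" "x \<in> U" using x by blast
      have "openin (subtopology X C) U" using H U by simp
      then obtain V where "openin X V" "U = V \<inter> C" by (auto simp: openin_subtopology)
      hence "V \<in> W n" using U unfolding W_def by simp
      thus "x \<in> \<Union>(W n)" using U \<open>U = V \<inter> C\<close> by blast
    qed
    have "\<forall>n. (\<forall>U\<in>W n. openin X U) \<and> X closure_of C \<subseteq> \<Union>(W n)"
      using cov by (auto simp: W_def)
    note hW = this
    have ne: "C \<noteq> {} \<and> C \<subseteq> topspace X" using False CT by blast
    have S': "\<forall>A. A \<noteq> {} \<and> A \<subseteq> topspace X \<longrightarrow>
       (\<forall>\<U> :: nat \<Rightarrow> 'a set set.
          (\<forall>n. (\<forall>U\<in>\<U> n. openin X U) \<and> X closure_of A \<subseteq> \<Union>(\<U> n)) \<longrightarrow>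
          (\<exists>F :: nat \<Rightarrow> 'a set. (\<forall>n. finite (F n) \<and> F n \<subseteq> X closure_of A) \<and>
             A \<subseteq> (\<Union>n. st (F n) (\<U> n))))" using S unfolding set_strongly_star_Menger_def .
    have "\<exists>F :: nat \<Rightarrow> 'a set. (\<forall>n. finite (F n) \<and> F n \<subseteq> X closure_of C) \<and>
             C \<subseteq> (\<Union>n. st (F n) (W n))"
      using S' ne hW by blast
    then obtain F where F: "\<forall>n. finite (F n) \<and> F n \<subseteq> X closure_of C"
      "C \<subseteq> (\<Union>n. st (F n) (W n))" by (elim exE conjE)
    have "C \<subseteq> (\<Union>n. st (F n) (\<U> n))"
    proof
      fix x assume x: "x \<in> C"
      hence "x \<in> (\<Union>n. st (F n) (W n))" using F(2) by blast
      then obtain n V where "V \<in> W n" "V \<inter> F n \<noteq> {}" "x \<in> V" unfolding st_def by blast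
      moreover have "F n \<subseteq> C" using F(1) cl by auto
      ultimately have "V \<inter> C \<in> \<U> n" "(V \<inter> C) \<inter> F n \<noteq> {}" "x \<in> V \<inter> C"
        using x by (auto simp: W_def)
      thus "x \<in> (\<Union>n. st (F n) (\<U> n))" by (auto simp: st_def)
    qed
    moreover have "(\<Union>n. st (F n) (\<U> n)) \<subseteq> C"
    proof -
      have "st (F n) (\<U> n) \<subseteq> \<Union>(\<U> n)" for n by (auto simp: st_def)
      moreover have "\<Union>(\<U> n) = C" for n using H top by simp
      ultimately show ?thesis by blast
    qed
    ultimately show ?thesis using F(1) cl top by (intro exI[of _ F]) auto
  qed
qed

lemma bwd:
  assumes H: "\<forall>C. closedin X C \<longrightarrow> strongly_star_Menger (subtopology X C)"
  shows "set_strongly_star_Menger X"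
  unfolding set_strongly_star_Menger_def
proof (intro allI impI)
  fix A and \<U> :: "nat \<Rightarrow> 'a set set"
  assume A: "A \<noteq> {} \<and> A \<subseteq> topspace X"
    and U: "\<forall>n. (\<forall>U\<in>\<U> n. openin X U) \<and> X closure_of A \<subseteq> \<Union>(\<U> n)"
  define C where "C = X closure_of A"
  have Cc: "closedin X C" by (simp add: C_def)
  have CT: "C \<subseteq> topspace X" using Cc closedin_subset by blast
  have top: "topspace (subtopology X C) = C" using CT by auto
  define W where "W n = (\<lambda>U. C \<inter> U) ` \<U> n" for n
  have "\<forall>n. (\<forall>U\<in>W n. openin (subtopology X C) U) \<and> \<Union>(W n) = topspace (subtopology X C)"
    using U top unfolding W_def C_def
    by (auto simp: openin_subtopology_Int2)
  then obtain F where F: "\<forall>n. finite (F n) \<and> F n \<subseteq> C" "C = (\<Union>n. st (F n) (W n))"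
    using H Cc top unfolding strongly_star_Menger_def by metis
  have "A \<subseteq> C" using A C_def closure_of_subset by blast
  have "A \<subseteq> (\<Union>n. st (F n) (\<U> n))"
  proof
    fix x assume "x \<in> A"
    hence "x \<in> C" using \<open>A \<subseteq> C\<close> by blast
    then obtain n V where "V \<in> W n" "V \<inter> F n \<noteq> {}" "x \<in> V" using F(2) by (auto simp: st_def)
    then obtain U where "U \<in> \<U> n" "V = C \<inter> U" by (auto simp: W_def)
    thus "x \<in> (\<Union>n. st (F n) (\<U> n))" using \<open>V \<inter> F n \<noteq> {}\<close> \<open>x \<in> V\<close> by (auto simp: st_def)
  qed
  thus "\<exists>F. (\<forall>n. finite (F n) \<and> F n \<subseteq> X closure_of A) \<and> A \<subseteq> (\<Union>n. st (F n) (\<U> n))"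
    using F(1) C_def by blast
qed

theorem proposition2p2:
  fixes X :: "'a topology"
  shows "set_strongly_star_Menger X \<longleftrightarrow>
         (\<forall>C. closedin X C \<longrightarrow> strongly_star_Menger (subtopology X C))"
  using fwd bwd by blast

end
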